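(* Let $\Omega$ be a convex subset of $M_{n\times n}(\mathbb{C})$ and let $\Omega_s$ be the set of all nonsingular matrices in $\Omega$ that have $n$ distinct eigenvalues. If the closure $\overline{\Omega}$ contains at least one nonsingular matrix with $n$ distinct eigenvalues, then $\Omega_s$ is dense in $\Omega$.
   Context: $M_{n\times n}(\mathbb{C})$ denotes the set of $n\times n$ complex matrices, equipped with the topology induced by the Frobenius norm $\|A\|_F=(\sum_{i,j}|a_{ij}|^2)^{1/2}$. *)

theory Defs
  imports "HOL-Analysis.Analysis"
begin

text \<open>n x n complex matrices are modelled as complex ^'n^'n (n = CARD('n)).
  The norm on this type is the Euclidean norm of all entries, i.e. the Frobenius norm.\<close>

definition mat_eigenvalue :: "complex^'n^'n \<Rightarrow> complex \<Rightarrow> bool" where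
  "mat_eigenvalue A c \<longleftrightarrow> (\<exists>v. v \<noteq> 0 \<and> A *v v = c *s v)"

definition mat_eigenvalues :: "complex^'n^'n \<Rightarrow> complex set" where
  "mat_eigenvalues A = {c. mat_eigenvalue A c}"

definition distinct_eigs :: "complex^'n^'n \<Rightarrow> bool" where
  "distinct_eigs A \<longleftrightarrow> card (mat_eigenvalues A) = CARD('n)"

end

theory Submission imports Defs "Subresultants.Subresultant_Gcd" "Jordan_Normal_Form.Char_Poly" "HOL-Computational_Algebra.Fundamental_Theorem_Algebra" "HOL-Computational_Algebra.Field_as_Ring" begin

lemma card_roots_iff:
  fixes p :: "complex poly"
  assumes p0: "p \<noteq> 0"
  shows "card {x. poly p x = 0} = degree p \<longleftrightarrow> (\<forall>a. \<not> (poly p a = 0 \<and> poly (pderiv p) a = 0))"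
proof -
  let ?S = "{x. poly p x = 0}"
  have fin: "finite ?S" using poly_roots_finite[OF p0] .
  have deg: "degree p = (\<Sum>x\<in>?S. order x p)"
    using size_proots_complex[of p] size_multiset_overloaded_eq[of "proots p"]
    by (simp add: set_count_proots[OF p0] count_proots[OF p0])
  have ge: "\<And>x. x \<in> ?S \<Longrightarrow> order x p \<ge> 1"
    using p0 by (auto simp: order_root)
  have "card ?S = degree p \<longleftrightarrow> (\<Sum>x\<in>?S. order x p - 1) = 0"
  proof -
    have "(\<Sum>x\<in>?S. order x p) = (\<Sum>x\<in>?S. (order x p - 1) + 1)"
    proof (rule sum.cong[OF refl])
      fix x assume "x \<in> ?S"
      then have "order x p \<ge> 1" by (rule ge)
      then show "order x p = order x p - 1 + 1" by simp
    qed
    also have "\<dots> = (\<Sum>x\<in>?S. order x p - 1) + card ?S"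
      by (simp only: sum.distrib card_eq_sum)
    finally show ?thesis using deg by linarith
  qed
  also have "\<dots> \<longleftrightarrow> (\<forall>x\<in>?S. order x p = 1)"
    using fin ge by (simp add: sum_eq_0_iff) (metis le_antisym not_one_le_zero zero_less_diff le_numeral_extra(4) diff_is_0_eq)
  also have "\<dots> \<longleftrightarrow> rsquarefree p"
    using p0 unfolding rsquarefree_def apply (auto simp: order_root)
    subgoal for x by (drule spec[of _ x]) auto
    done
  also have "\<dots> \<longleftrightarrow> (\<forall>a. \<not> (poly p a = 0 \<and> poly (pderiv p) a = 0))"
    by (rule rsquarefree_roots)
  finally show ?thesis .
qed

lemma resultant_pderiv_iff:
  fixes p :: "complex poly"
  assumes p0: "p \<noteq> 0"
  shows "resultant p (pderiv p) \<noteq> 0 \<longleftrightarrow> (\<forall>a. \<not> (poly p a = 0 \<and> poly (pderiv p) a = 0))"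
proof
  assume r: "resultant p (pderiv p) \<noteq> 0"
  show "\<forall>a. \<not> (poly p a = 0 \<and> poly (pderiv p) a = 0)"
  proof (intro allI notI)
    fix a assume a: "poly p a = 0 \<and> poly (pderiv p) a = 0"
    then have "[:-a,1:] dvd p" "[:-a,1:] dvd pderiv p" by (auto simp: poly_eq_0_iff_dvd)
    then have d: "[:-a,1:] dvd gcd p (pderiv p)" by auto
    have "gcd p (pderiv p) \<noteq> 0" using p0 by auto
    from dvd_imp_degree_le[OF d this] have "degree (gcd p (pderiv p)) \<noteq> 0" by auto
    with r resultant_0_gcd show False by blast
  qed
next
  assume h: "\<forall>a. \<not> (poly p a = 0 \<and> poly (pderiv p) a = 0)"
  show "resultant p (pderiv p) \<noteq> 0"
  proof
    assume "resultant p (pderiv p) = 0"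
    then have "degree (gcd p (pderiv p)) \<noteq> 0" using resultant_0_gcd by blast
    then obtain a where "poly (gcd p (pderiv p)) a = 0" using alg_closed_imp_poly_has_root by blast
    then have "[:-a,1:] dvd gcd p (pderiv p)" by (simp add: poly_eq_0_iff_dvd)
    then have "[:-a,1:] dvd p" "[:-a,1:] dvd pderiv p" using dvd_trans by blast+
    then show False using h by (auto simp: poly_eq_0_iff_dvd)
  qed
qed

lemma invertible_iff_eig0:
  fixes M :: "complex^'n^'n"
  shows "invertible M \<longleftrightarrow> \<not> mat_eigenvalue M 0"
proof
  assume "invertible M"
  then have "bij ((*v) M)" by (simp add: invertible_eq_bij)
  then have "inj ((*v) M)" by (rule bij_is_inj)
  then show "\<not> mat_eigenvalue M 0" unfolding mat_eigenvalue_def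
    by (metis matrix_vector_mult_0_right scalar_mult_eq_scaleR injD vector_smult_lzero)
next
  assume h: "\<not> mat_eigenvalue M 0"
  have "inj ((*v) M)"
  proof (rule injI)
    fix x y assume "M *v x = M *v y"
    then have "M *v (x - y) = 0 *s (x - y)" by (simp add: matrix_vector_mult_diff_distrib)
    with h have "x - y = 0" unfolding mat_eigenvalue_def by blast
    then show "x = y" by simp
  qed
  then have "Determinants.det (matrix ((*v) M)) \<noteq> 0"
    using det_nz_iff_inj_gen[OF matrix_vector_mul_linear_gen] by blast
  then show "invertible M" by (simp add: matrix_of_matrix_vector_mul invertible_det_nz)
qed

no_notation Matrix.vec_index (infixl "$" 100)
notation Matrix.vec_index (infixl "$$$" 100)

definition tm :: "(nat \<Rightarrow> 'n) \<Rightarrow> ('a::zero)^'n^'n \<Rightarrow> 'a mat" where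
  "tm e M = Matrix.mat CARD('n) CARD('n) (\<lambda>(i,j). M $ e i $ e j)"

lemma tm_carrier[simp]: "tm e (M::'a::zero^'n^'n) \<in> carrier_mat CARD('n) CARD('n)"
  by (simp add: tm_def)

lemma tm_mult:
  fixes M :: "complex^'n^'n"
  assumes e: "bij_betw e {..<CARD('n)} UNIV" and i: "i < CARD('n)"
  shows "(tm e M *\<^sub>v Matrix.vec CARD('n) (\<lambda>i. v $ e i)) $$$ i = (M *v v) $ e i"
proof -
  have "(tm e M *\<^sub>v Matrix.vec CARD('n) (\<lambda>i. v $ e i)) $$$ i = (\<Sum>j<CARD('n). M $ e i $ e j * v $ e j)"
    using i by (simp add: tm_def scalar_prod_def lessThan_atLeast0)
  also have "\<dots> = (\<Sum>k\<in>UNIV. M $ e i $ k * v $ k)"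
    by (rule sum.reindex_bij_betw[OF e, where g = "\<lambda>k. M $ e i $ k * v $ k"])
  also have "\<dots> = (M *v v) $ e i" by (simp add: matrix_vector_mult_def)
  finally show ?thesis .
qed

lemma eig_tm:
  fixes M :: "complex^'n^'n"
  assumes e: "bij_betw e {..<CARD('n)} UNIV"
  shows "mat_eigenvalue M c \<longleftrightarrow> eigenvalue (tm e M) c"
proof
  assume "mat_eigenvalue M c"
  then obtain v where v0: "v \<noteq> 0" and ev: "M *v v = c *s v" unfolding mat_eigenvalue_def by auto
  define w where "w = Matrix.vec CARD('n) (\<lambda>i. v $ e i)"
  from v0 obtain k where k: "v $ k \<noteq> 0" using Finite_Cartesian_Product.vec_eq_iff[of v 0] by auto
  from e obtain i where i: "i < CARD('n)" "e i = k" unfolding bij_betw_def by (metis UNIV_I imageE lessThan_iff)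
  have "w \<noteq> 0\<^sub>v CARD('n)"
  proof
    assume "w = 0\<^sub>v CARD('n)"
    then have "w $$$ i = 0" using i by simp
    then show False using i k by (simp add: w_def)
  qed
  moreover have "tm e M *\<^sub>v w = c \<cdot>\<^sub>v w"
  proof (rule eq_vecI)
    fix j assume "j < dim_vec (c \<cdot>\<^sub>v w)"
    then have j: "j < CARD('n)" by (simp add: w_def)
    show "(tm e M *\<^sub>v w) $$$ j = (c \<cdot>\<^sub>v w) $$$ j"
      unfolding w_def tm_mult[OF e j] using j by (simp add: ev)
  qed (simp add: w_def tm_def)
  ultimately show "eigenvalue (tm e M) c"
    unfolding eigenvalue_def eigenvector_def by (intro exI[of _ w]) (simp add: w_def tm_def)
next
  assume "eigenvalue (tm e M) c"
  then obtain w where wc: "w \<in> carrier_vec CARD('n)" and w0: "w \<noteq> 0\<^sub>v CARD('n)"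
    and ev: "tm e M *\<^sub>v w = c \<cdot>\<^sub>v w"
    unfolding eigenvalue_def eigenvector_def by (auto simp: tm_def)
  define g where "g = inv_into {..<CARD('n)} e"
  define v :: "complex^'n" where "v = (\<chi> k. w $$$ g k)"
  have inj: "inj_on e {..<CARD('n)}" using e by (simp add: bij_betw_def)
  have ve: "\<And>i. i < CARD('n) \<Longrightarrow> v $ e i = w $$$ i"
    unfolding v_def g_def using inj by (simp add: inv_into_f_f)
  have wv: "w = Matrix.vec CARD('n) (\<lambda>i. v $ e i)"
    using wc by (intro eq_vecI) (auto simp: ve)
  have surj: "\<And>k. \<exists>i. i < CARD('n) \<and> e i = k"
    using e unfolding bij_betw_def by (metis UNIV_I imageE lessThan_iff)
  from w0 wc obtain i where i: "i < CARD('n)" "w $$$ i \<noteq> 0"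
    by (metis eq_vecI carrier_vecD index_zero_vec(1) index_zero_vec(2))
  have "v \<noteq> 0"
  proof
    assume "v = 0" then have "v $ e i = 0" by simp
    then show False using i ve by simp
  qed
  moreover have "M *v v = c *s v"
  proof (subst Finite_Cartesian_Product.vec_eq_iff, rule allI)
    fix k
    obtain j where j: "j < CARD('n)" "e j = k" using surj by blast
    have "(M *v v) $ e j = (tm e M *\<^sub>v w) $$$ j" using tm_mult[OF e j(1), of M v] wv by simp
    also have "\<dots> = c * w $$$ j" using ev j wc by simp
    finally show "(M *v v) $ k = (c *s v) $ k" using j ve[OF j(1)] by simp
  qed
  ultimately show "mat_eigenvalue M c" unfolding mat_eigenvalue_def by blast
qed


definition good :: "complex^'n^'n \<Rightarrow> bool" where
  "good M \<longleftrightarrow> invertible M \<and> distinct_eigs M"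

lemma good_iff:
  fixes M :: "complex^'n^'n"
  assumes e: "bij_betw e {..<CARD('n)} UNIV"
  shows "good M \<longleftrightarrow> resultant (char_poly (tm e M)) (pderiv (char_poly (tm e M))) * poly (char_poly (tm e M)) 0 \<noteq> 0"
proof -
  let ?P = "char_poly (tm e M)"
  have dm: "degree ?P = CARD('n) \<and> coeff ?P CARD('n) = 1"
    by (rule degree_monic_char_poly[OF tm_carrier])
  then have P0: "?P \<noteq> 0" by auto
  have eigs: "mat_eigenvalues M = {c. poly ?P c = 0}"
    unfolding mat_eigenvalues_def using eig_tm[OF e, of M] eigenvalue_root_char_poly[OF tm_carrier, of e M] by auto
  have "distinct_eigs M \<longleftrightarrow> resultant ?P (pderiv ?P) \<noteq> 0"
    unfolding distinct_eigs_def eigs using dm card_roots_iff[OF P0] resultant_pderiv_iff[OF P0] by simp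
  moreover have "invertible M \<longleftrightarrow> poly ?P 0 \<noteq> 0"
    using invertible_iff_eig0[of M] eig_tm[OF e, of M] eigenvalue_root_char_poly[OF tm_carrier, of e M] by auto
  ultimately show ?thesis unfolding good_def by auto
qed

lemma segment_finite:
  fixes X Y :: "complex^'n^'n"
  assumes g1: "good ((1 - t1) *\<^sub>R X + t1 *\<^sub>R Y)"
  shows "finite {t::real. \<not> good ((1 - t) *\<^sub>R X + t *\<^sub>R Y)}"
proof -
  obtain e where e: "bij_betw e {0..<CARD('n)} (UNIV::'n set)"
    using ex_bij_betw_nat_finite[of "UNIV::'n set"] by auto
  then have e: "bij_betw e {..<CARD('n)} (UNIV::'n set)" by (simp add: lessThan_atLeast0)
  define T :: "complex poly mat" where
    "T = Matrix.mat CARD('n) CARD('n) (\<lambda>(i,j). [: X $ e i $ e j, Y $ e i $ e j - X $ e i $ e j :])"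
  have Tc: "T \<in> carrier_mat CARD('n) CARD('n)" by (simp add: T_def)
  define P where "P = char_poly T"
  define Q where "Q = resultant P (pderiv P) * coeff P 0"
  have key: "good ((1 - t) *\<^sub>R X + t *\<^sub>R Y) \<longleftrightarrow> poly Q (of_real t) \<noteq> 0" for t :: real
  proof -
    let ?h = "\<lambda>q. poly q (complex_of_real t)"
    let ?Z = "(1 - t) *\<^sub>R X + t *\<^sub>R Y"
    have "map_mat ?h T = tm e ?Z"
    proof -
      have sc: "\<And>r (z::complex). r *\<^sub>R z = of_real r * z" by (simp add: scaleR_conv_of_real)
      show ?thesis by (rule eq_matI) (auto simp: T_def tm_def sc algebra_simps)
    qed
    then have cp: "char_poly (tm e ?Z) = map_poly ?h P"
      unfolding P_def using poly_hom.char_poly_hom[OF Tc] by metis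
    have d1: "degree (map_poly ?h P) = degree P"
      using degree_monic_char_poly[OF Tc] degree_monic_char_poly[OF tm_carrier, of e ?Z] cp P_def by simp
    have d2: "degree (map_poly ?h (pderiv P)) = degree (pderiv P)"
      unfolding poly_hom.map_poly_pderiv degree_pderiv d1 ..
    have "resultant (char_poly (tm e ?Z)) (pderiv (char_poly (tm e ?Z))) = ?h (resultant P (pderiv P))"
      unfolding cp poly_hom.map_poly_pderiv[symmetric] by (rule poly_hom.resultant_map_poly[OF d1 d2])
    moreover have "poly (char_poly (tm e ?Z)) 0 = ?h (coeff P 0)"
      unfolding cp by (simp add: poly_0_coeff_0)
    ultimately show ?thesis unfolding good_iff[OF e] Q_def by simp
  qed
  have "Q \<noteq> 0" using key[of t1] g1 by auto
  then have "finite {z. poly Q z = 0}" by (rule poly_roots_finite)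
  then have "finite (complex_of_real -` {z. poly Q z = 0})"
    by (rule finite_vimageI) (simp add: inj_on_def)
  moreover have "{t::real. \<not> good ((1 - t) *\<^sub>R X + t *\<^sub>R Y)} = complex_of_real -` {z. poly Q z = 0}"
    using key by auto
  ultimately show ?thesis by simp
qed


lemma exists_good_t:
  fixes F :: "real set"
  assumes "finite F" "d > 0"
  obtains t where "0 < t" "t < d" "t \<notin> F"
proof -
  have "infinite {0<..<d}" using assms(2) by (simp add: infinite_Ioo)
  then have "{0<..<d} - F \<noteq> {}" using Diff_infinite_finite[OF assms(1)] by (metis finite.emptyI)
  then obtain t where "t \<in> {0<..<d} - F" by blast
  then show ?thesis using that by auto
qed

theorem theorem3p6:
  fixes \<Omega> :: "(complex^'n^'n) set"
  assumes "convex \<Omega>"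
    and "\<exists>A\<in>closure \<Omega>. invertible A \<and> distinct_eigs A"
  shows "\<Omega> \<subseteq> closure {A\<in>\<Omega>. invertible A \<and> distinct_eigs A}"
proof
  fix A assume A: "A \<in> \<Omega>"
  let ?S = "{A\<in>\<Omega>. invertible A \<and> distinct_eigs A}"
  from assms(2) obtain B where B: "B \<in> closure \<Omega>" "good B" unfolding good_def by auto
  have "rel_interior \<Omega> \<noteq> {}" using A assms(1) rel_interior_eq_empty by auto
  then obtain C where C: "C \<in> rel_interior \<Omega>" by auto
  have CO: "C \<in> \<Omega>" using C rel_interior_subset by auto
  obtain G where G: "G \<in> \<Omega>" "good G"
  proof (cases "C = B")
    case True then show ?thesis using that CO B by auto
  next
    case False
    have fin1: "finite {t::real. \<not> good ((1 - t) *\<^sub>R C + t *\<^sub>R B)}"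
      by (rule segment_finite[of 1]) (simp only: B diff_self scaleR_zero_left scaleR_one add_0_left)
    obtain t where t: "0 < t" "t < 1" "t \<notin> {t::real. \<not> good ((1 - t) *\<^sub>R C + t *\<^sub>R B)}"
      using exists_good_t[OF fin1, of 1] by force
    have "(1 - t) *\<^sub>R C + t *\<^sub>R B \<in> open_segment C B"
      using t False unfolding in_segment(2) by auto
    then have "(1 - t) *\<^sub>R C + t *\<^sub>R B \<in> \<Omega>"
      using rel_interior_closure_convex_segment[OF assms(1) C B(1)] rel_interior_subset by blast
    then show ?thesis using that t by auto
  qed
  show "A \<in> closure ?S"
  proof (cases "A = G")
    case True
    then have "A \<in> ?S" using G A unfolding good_def by simp
    then show ?thesis by (rule subsetD[OF closure_subset])
  next
    case False
    have fin: "finite {t::real. \<not> good ((1 - t) *\<^sub>R A + t *\<^sub>R G)}"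
      by (rule segment_finite[of 1]) (simp only: G diff_self scaleR_zero_left scaleR_one add_0_left)
    have nz: "norm (G - A) > 0" using False by simp
    show ?thesis unfolding closure_approachable
    proof (intro allI impI)
      fix \<epsilon> :: real assume "\<epsilon> > 0"
      define d where "d = min 1 (\<epsilon> / norm (G - A))"
      have d: "d > 0" using \<open>\<epsilon> > 0\<close> nz by (simp add: d_def)
      obtain t where t: "0 < t" "t < d" "t \<notin> {t::real. \<not> good ((1 - t) *\<^sub>R A + t *\<^sub>R G)}"
        using exists_good_t[OF fin d] by blast
      let ?y = "(1 - t) *\<^sub>R A + t *\<^sub>R G"
      have t1: "t \<le> 1" using t d_def by simp
      have yO: "?y \<in> \<Omega>"
        by (rule convexD[OF assms(1) A G(1)]) (use t t1 in auto)
      have "?y - A = t *\<^sub>R (G - A)" by (simp add: algebra_simps)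
      then have "dist ?y A = t * norm (G - A)" using t by (simp add: dist_norm)
      also have "\<dots> < d * norm (G - A)" using t nz by simp
      also have "\<dots> \<le> \<epsilon> / norm (G - A) * norm (G - A)"
        by (rule mult_right_mono) (auto simp: d_def)
      also have "\<dots> = \<epsilon>" using nz by simp
      finally have "dist ?y A < \<epsilon>" .
      moreover have "?y \<in> ?S" using yO t unfolding good_def by auto
      ultimately show "\<exists>y\<in>?S. dist y A < \<epsilon>" by blast
    qed
  qed
qed

end
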